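(* Let $\pi>0$, $\bar d>0$, $0<\theta_1<\dots<\theta_K$, $0\le\beta_1<\dots<\beta_M\le1$, $A:[0,D]\to[0,\bar d]$ continuously differentiable and decreasing. Let $L(Q,\beta,\theta)=\theta[\bar d-\beta A(Q)]-\pi(1-\beta)A(Q)$, $\bar S(Q,\Pi,\Lambda)=L(Q,\Lambda)-\Pi$ and $\sigma(Q,\beta,\theta)=-[\theta\beta+\pi(1-\beta)]A'(Q)$. Enumerate the $KM$ types $(\beta_m,\theta_k)$ as $\Lambda_1,\dots,\Lambda_{KM}$ with $\sigma(Q,\Lambda_1)\le\dots\le\sigma(Q,\Lambda_{KM})$, and let $\epsilon$ be an index such that $\bar S(Q,\Pi,\Lambda_\epsilon)\le\bar S(Q,\Pi,\Lambda_i)$ for all $i$ and all $(Q,\Pi)$. Define $\eta^-(\Lambda_i,Q_i,Q_{i-1})=L(Q_i,\Lambda_i)-L(Q_{i-1},\Lambda_i)$ and $\eta^+(\Lambda_i,Q_i,Q_{i+1})=L(Q_i,\Lambda_i)-L(Q_{i+1},\Lambda_i)$. A contract $\{(Q_i,\Pi_i)\}_{i=1}^{KM}$ with $Q_i\in[0,D]$ is feasible (i.e. $\bar S(Q_i,\Pi_i,\Lambda_i)\ge0$ for all $i$ and $\bar S(Q_i,\Pi_i,\Lambda_i)\ge\bar S(Q_j,\Pi_j,\Lambda_i)$ for all $i\ne j$) if all of the following hold: 1) $Q_1\le Q_2\le\dots\le Q_{KM}$; 2) $\Pi_\epsilon\le L(Q_\epsilon,\Lambda_\epsilon)$; 3)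 for all $i=1,\dots,\epsilon-1$: $\Pi_i\le\Pi_{i+1}+\eta^+(\Lambda_i,Q_i,Q_{i+1})$ and $\Pi_i\ge\Pi_{i+1}-\eta^-(\Lambda_{i+1},Q_{i+1},Q_i)$; 4) for all $i=\epsilon+1,\dots,KM$: $\Pi_i\le\Pi_{i-1}+\eta^-(\Lambda_i,Q_i,Q_{i-1})$ and $\Pi_i\ge\Pi_{i-1}-\eta^+(\Lambda_{i-1},Q_{i-1},Q_i)$.
   Context: Model: an operator offers one contract item (data cap $Q_i$, subscription fee $\Pi_i$) for each user type $\Lambda_i=(\beta,\theta)$ (network substitutability $\beta$, data valuation $\theta$). $\pi$ is the overage price, $\bar d$ the mean demand, $A(Q)$ the expected overage consumption under cap $Q$ (decreasing, convex). $L$ is the virtual payoff, $\bar S$ the expected payoff, $\sigma$ the willingness-to-pay (the ordering by $\sigma$ does not depend on $Q$), $\Lambda_\epsilon$ the smallest-payoff type (which exists and does not depend on $(Q,\Pi)$). *)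

theory Defs
  imports "HOL-Analysis.Analysis"
begin

text \<open>A user type is a pair (beta, theta): network substitutability and data valuation.\<close>

definition Lpay :: "real \<Rightarrow> real \<Rightarrow> (real \<Rightarrow> real) \<Rightarrow> real \<Rightarrow> real \<times> real \<Rightarrow> real" where
  "Lpay ppi dbar A Q Lam = snd Lam * (dbar - fst Lam * A Q) - ppi * (1 - fst Lam) * A Q"

definition Sbar :: "real \<Rightarrow> real \<Rightarrow> (real \<Rightarrow> real) \<Rightarrow> real \<Rightarrow> real \<Rightarrow> real \<times> real \<Rightarrow> real" where
  "Sbar ppi dbar A Q P Lam = Lpay ppi dbar A Q Lam - P"

definition sigma :: "real \<Rightarrow> (real \<Rightarrow> real) \<Rightarrow> real \<Rightarrow> real \<times> real \<Rightarrow> real" where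
  "sigma ppi A' Q Lam = - (snd Lam * fst Lam + ppi * (1 - fst Lam)) * A' Q"

definition eta_minus :: "real \<Rightarrow> real \<Rightarrow> (real \<Rightarrow> real) \<Rightarrow> real \<times> real \<Rightarrow> real \<Rightarrow> real \<Rightarrow> real" where
  "eta_minus ppi dbar A Lam Qi Qprev = Lpay ppi dbar A Qi Lam - Lpay ppi dbar A Qprev Lam"

definition eta_plus :: "real \<Rightarrow> real \<Rightarrow> (real \<Rightarrow> real) \<Rightarrow> real \<times> real \<Rightarrow> real \<Rightarrow> real \<Rightarrow> real" where
  "eta_plus ppi dbar A Lam Qi Qnext = Lpay ppi dbar A Qi Lam - Lpay ppi dbar A Qnext Lam"

definition feasible :: "real \<Rightarrow> real \<Rightarrow> (real \<Rightarrow> real) \<Rightarrow> nat \<Rightarrow> (nat \<Rightarrow> real \<times> real)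
    \<Rightarrow> (nat \<Rightarrow> real) \<Rightarrow> (nat \<Rightarrow> real) \<Rightarrow> bool" where
  "feasible ppi dbar A N Lam Q P \<longleftrightarrow>
     (\<forall>i\<in>{1..N}. Sbar ppi dbar A (Q i) (P i) (Lam i) \<ge> 0) \<and>
     (\<forall>i\<in>{1..N}. \<forall>j\<in>{1..N}. i \<noteq> j \<longrightarrow>
        Sbar ppi dbar A (Q i) (P i) (Lam i) \<ge> Sbar ppi dbar A (Q j) (P j) (Lam i))"

end

theory Submission
  imports Defs
begin


lemma Lpay_eq: "Lpay ppi dbar A x L = snd L * dbar - (snd L * fst L + ppi * (1 - fst L)) * A x"
  by (simp add: Lpay_def algebra_simps)

lemma deriv_neg_exists:
  fixes A A' :: "real \<Rightarrow> real"
  assumes A_deriv: "\<forall>x\<in>{0..D}. (A has_real_derivative A' x) (at x within {0..D})"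
    and u: "u \<in> {0..D}" and v: "v \<in> {0..D}" and uv: "u \<le> v" and Av: "A v < A u"
  shows "\<exists>x\<in>{0..D}. A' x < 0"
proof -
  have "u < v" using uv Av by (cases "u = v") auto
  have "\<And>x. u \<le> x \<Longrightarrow> x \<le> v \<Longrightarrow> (A has_derivative (\<lambda>h. A' x * h)) (at x within {u..v})"
  proof -
    fix x assume "u \<le> x" "x \<le> v"
    then have "x \<in> {0..D}" "{u..v} \<subseteq> {0..D}" using u v by auto
    then have "(A has_real_derivative A' x) (at x within {u..v})"
      using A_deriv has_field_derivative_subset by blast
    then show "(A has_derivative (\<lambda>h. A' x * h)) (at x within {u..v})"
      by (simp add: has_field_derivative_def)
  qed
  from mvt_simple[OF \<open>u < v\<close> this] obtain x where x: "x \<in> {u<..<v}" "A v - A u = A' x * (v - u)"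
    by blast
  have "A' x < 0"
  proof (rule ccontr)
    assume "\<not> A' x < 0"
    then have "A' x * (v - u) \<ge> 0" using \<open>u < v\<close> by simp
    then show False using x Av by linarith
  qed
  moreover have "x \<in> {0..D}" using x u v by auto
  ultimately show ?thesis by blast
qed

theorem theorem2:
  fixes ppi dbar D :: real and K M N eps :: nat
    and beta theta :: "nat \<Rightarrow> real" and A A' :: "real \<Rightarrow> real"
    and lam :: "nat \<Rightarrow> nat \<times> nat" and Lam :: "nat \<Rightarrow> real \<times> real"
    and Q P :: "nat \<Rightarrow> real"
  assumes pi_pos: "ppi > 0" and dbar_pos: "dbar > 0"
    and theta_pos: "\<forall>k\<in>{1..K}. 0 < theta k" and theta_mono: "strict_mono_on {1..K} theta"
    and beta_range: "\<forall>m\<in>{1..M}. 0 \<le> beta m \<and> beta m \<le> 1" and beta_mono: "strict_mono_on {1..M} beta"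
    and A_range: "\<forall>x\<in>{0..D}. 0 \<le> A x \<and> A x \<le> dbar"
    and A_deriv: "\<forall>x\<in>{0..D}. (A has_real_derivative A' x) (at x within {0..D})"
    and A'_cont: "continuous_on {0..D} A'"
    and A_decr: "\<forall>x\<in>{0..D}. \<forall>y\<in>{0..D}. x \<le> y \<longrightarrow> A y \<le> A x"
    and N_def: "N = K * M"
    and lam_bij: "bij_betw lam {1..N} ({1..M} \<times> {1..K})"
    and Lam_def: "\<forall>i\<in>{1..N}. Lam i = (beta (fst (lam i)), theta (snd (lam i)))"
    and sigma_sorted: "\<forall>x\<in>{0..D}. \<forall>i\<in>{1..N}. \<forall>j\<in>{1..N}. i \<le> j \<longrightarrow>
                         sigma ppi A' x (Lam i) \<le> sigma ppi A' x (Lam j)"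
    and eps_range: "eps \<in> {1..N}"
    and eps_min: "\<forall>x\<in>{0..D}. \<forall>p::real. \<forall>i\<in>{1..N}.
                    Sbar ppi dbar A x p (Lam eps) \<le> Sbar ppi dbar A x p (Lam i)"
    and Q_range: "\<forall>i\<in>{1..N}. Q i \<in> {0..D}"
    and c1: "\<forall>i\<in>{1..N}. \<forall>j\<in>{1..N}. i \<le> j \<longrightarrow> Q i \<le> Q j"
    and c2: "P eps \<le> Lpay ppi dbar A (Q eps) (Lam eps)"
    and c3: "\<forall>i. 1 \<le> i \<and> i < eps \<longrightarrow>
               P i \<le> P (i + 1) + eta_plus ppi dbar A (Lam i) (Q i) (Q (i + 1)) \<and>
               P i \<ge> P (i + 1) - eta_minus ppi dbar A (Lam (i + 1)) (Q (i + 1)) (Q i)"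
    and c4: "\<forall>i. eps + 1 \<le> i \<and> i \<le> N \<longrightarrow>
               P i \<le> P (i - 1) + eta_minus ppi dbar A (Lam i) (Q i) (Q (i - 1)) \<and>
               P i \<ge> P (i - 1) - eta_plus ppi dbar A (Lam (i - 1)) (Q (i - 1)) (Q i)"
  shows "feasible ppi dbar A N Lam Q P"
proof -
  define cc where "cc = (\<lambda>L::real\<times>real. snd L * fst L + ppi * (1 - fst L))"
  define a where "a = (\<lambda>i. A (Q i))"
  have Lp: "\<And>x L. Lpay ppi dbar A x L = snd L * dbar - cc L * A x"
    by (simp add: Lpay_eq cc_def)
  have cmono: "cc (Lam i) \<le> cc (Lam j)"
    if "i \<in> {1..N}" "j \<in> {1..N}" "i \<le> j" "p \<in> {1..N}" "q \<in> {1..N}" "p \<le> q" "a q < a p"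
    for i j p q
  proof -
    have "Q p \<le> Q q" using c1 that by blast
    from deriv_neg_exists[OF A_deriv _ _ this] that Q_range
    obtain x where x: "x \<in> {0..D}" "A' x < 0" unfolding a_def by blast
    have "sigma ppi A' x (Lam i) \<le> sigma ppi A' x (Lam j)" using sigma_sorted x that by blast
    then have "- cc (Lam i) * A' x \<le> - cc (Lam j) * A' x" by (simp add: sigma_def cc_def)
    then have "cc (Lam j) * A' x \<le> cc (Lam i) * A' x" by simp
    then show ?thesis using x(2) mult_le_cancel_right[of "cc (Lam j)" "A' x" "cc (Lam i)"] by linarith
  qed
  have amono: "a j \<le> a i" if "i \<in> {1..N}" "j \<in> {1..N}" "i \<le> j" for i j
    using A_decr c1 Q_range that unfolding a_def by blast
  have adj: "cc (Lam k) * (a k - a (k+1)) \<le> P (k+1) - P k \<and> P (k+1) - P k \<le> cc (Lam (k+1)) * (a k - a (k+1))"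
    if "1 \<le> k" "k < N" for k
  proof (cases "k < eps")
    case True
    have "P k \<le> P (k + 1) + eta_plus ppi dbar A (Lam k) (Q k) (Q (k + 1)) \<and>
               P k \<ge> P (k + 1) - eta_minus ppi dbar A (Lam (k + 1)) (Q (k + 1)) (Q k)"
      using c3 that True by blast
    then show ?thesis
      by (simp add: eta_plus_def eta_minus_def Lp a_def algebra_simps)
  next
    case False
    then have "eps + 1 \<le> k + 1" "k + 1 \<le> N" using that by auto
    then have "P (k+1) \<le> P (k+1 - 1) + eta_minus ppi dbar A (Lam (k+1)) (Q (k+1)) (Q (k+1 - 1)) \<and>
               P (k+1) \<ge> P (k+1 - 1) - eta_plus ppi dbar A (Lam (k+1 - 1)) (Q (k+1 - 1)) (Q (k+1))"
      using c4 by blast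
    then show ?thesis
      by (simp add: eta_plus_def eta_minus_def Lp a_def algebra_simps)
  qed
  have glob: "cc (Lam i) * (a i - a j) \<le> P j - P i \<and> P j - P i \<le> cc (Lam j) * (a i - a j)"
    if "i \<in> {1..N}" "j \<in> {1..N}" "i \<le> j" for i j
    using that(3,2)
  proof (induction j rule: dec_induct)
    case base
    then show ?case by simp
  next
    case (step j)
    have j1: "j \<in> {1..N}" "j + 1 \<in> {1..N}" "i \<le> j" using step that(1) by auto
    have IH: "cc (Lam i) * (a i - a j) \<le> P j - P i \<and> P j - P i \<le> cc (Lam j) * (a i - a j)"
      using step j1 that(1) by auto
    have ad: "cc (Lam j) * (a j - a (j+1)) \<le> P (j+1) - P j \<and> P (j+1) - P j \<le> cc (Lam (j+1)) * (a j - a (j+1))"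
      using adj[of j] step j1 that(1) by auto
    have d1: "cc (Lam i) * (a j - a (j+1)) \<le> cc (Lam j) * (a j - a (j+1))"
    proof (cases "a (j+1) < a j")
      case True
      then have "cc (Lam i) \<le> cc (Lam j)" using cmono[of i j j "j+1"] step j1 that(1) by auto
      then show ?thesis using True by (simp add: mult_right_mono)
    next
      case False
      then have "a (j+1) = a j" using amono[of j "j+1"] step j1 that(1) by auto
      then show ?thesis by simp
    qed
    have d2: "cc (Lam j) * (a i - a j) \<le> cc (Lam (j+1)) * (a i - a j)"
    proof (cases "a j < a i")
      case True
      then have "cc (Lam j) \<le> cc (Lam (j+1))" using cmono[of j "j+1" i j] step j1 that(1) by auto
      then show ?thesis using True by (simp add: mult_right_mono)
    next
      case False
      then have "a j = a i" using amono[of i j] step j1 that(1) by auto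
      then show ?thesis by simp
    qed
    have "cc (Lam i) * (a i - a (j+1)) \<le> P (j+1) - P i \<and> P (j+1) - P i \<le> cc (Lam (j+1)) * (a i - a (j+1))"
      using IH ad d1 d2 by (simp add: algebra_simps)
    then show ?case by simp
  qed
  have IC: "Sbar ppi dbar A (Q i) (P i) (Lam i) \<ge> Sbar ppi dbar A (Q j) (P j) (Lam i)"
    if "i \<in> {1..N}" "j \<in> {1..N}" for i j
  proof (cases "i \<le> j")
    case True
    then show ?thesis using glob[of i j] that by (simp add: Sbar_def Lp a_def algebra_simps)
  next
    case False
    then show ?thesis using glob[of j i] that by (simp add: Sbar_def Lp a_def algebra_simps)
  qed
  have IR: "Sbar ppi dbar A (Q i) (P i) (Lam i) \<ge> 0" if "i \<in> {1..N}" for i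
  proof -
    have "Sbar ppi dbar A (Q eps) (P eps) (Lam eps) \<le> Sbar ppi dbar A (Q eps) (P eps) (Lam i)"
      using eps_min Q_range eps_range that by blast
    moreover have "Sbar ppi dbar A (Q eps) (P eps) (Lam eps) \<ge> 0" using c2 by (simp add: Sbar_def)
    ultimately show ?thesis using IC[OF that eps_range] by linarith
  qed
  show ?thesis unfolding feasible_def using IC IR by blast
qed

end
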